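(* Let $2\le r_1\le r_2$ be integers, let $\mathcal{F}=(\mathcal{F}_\alpha)_{\alpha\in\mathcal{A}}$ be a sequence of set families (each $\mathcal{F}_\alpha$ a family of non-empty subsets of $[n_\alpha]$), and let $m:\mathcal{A}\to\mathbb{N}$ be a function with $m(\alpha)<\chi(K^{r_2}(\mathcal{F}_\alpha))$ for all $\alpha\in\mathcal{A}$. Then $\textsc{Kneser}^{r_1}(\mathcal{F},m)$ is polynomial-time reducible to $\textsc{Kneser}^{r_2}(\mathcal{F},m)$.
   Context: For an integer $r\ge2$ and a set family $\mathcal{G}$, the Kneser hypergraph $K^r(\mathcal{G})$ has vertex set $\mathcal{G}$ and hyperedges all $r$-subsets of $\mathcal{G}$ whose members are pairwise disjoint; $\chi$ denotes the chromatic number (minimum number of colors in a coloring of the vertices with no monochromatic hyperedge). Subsets of $[n]$ are identified with characteristic vectors in $\{0,1\}^n$. The $\textsc{Kneser}^r(\mathcal{F},m)$ problem: given $\alpha\in\mathcal{A}$ and a Boolean circuit $C:\{0,1\}^{n_\alpha}\to[m(\alpha)]$ (representing the coloring $B\mapsto C(B)$ of $\mathcal{F}_\alpha$), find $r$ pairwise disjoint $B_1,\dots,B_r\in\mathcal{F}_\alpha$ with $C(B_1)=\dots=C(B_r)$. A polynomial-time reduction from $P$ to $Q$ consists of polynomial-time algorithms $f,g$ with $f$ mapping instances $x$ of $P$ to instances of $Q$ and $g(x,y)$ a solution of $x$ for every solution $y$ of $f(x)$. *)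

theory Defs
  imports Main
begin

definition kneser_hyperedges :: "nat \<Rightarrow> nat set set \<Rightarrow> nat set set set" where
  "kneser_hyperedges r G =
     {E. E \<subseteq> G \<and> card E = r \<and> (\<forall>B\<in>E. \<forall>B'\<in>E. B \<noteq> B' \<longrightarrow> B \<inter> B' = {})}"

definition proper_kneser_coloring :: "nat \<Rightarrow> nat set set \<Rightarrow> nat \<Rightarrow> (nat set \<Rightarrow> nat) \<Rightarrow> bool" where
  "proper_kneser_coloring r G k c \<longleftrightarrow>
     c ` G \<subseteq> {1..k} \<and> (\<forall>E\<in>kneser_hyperedges r G. \<exists>B\<in>E. \<exists>B'\<in>E. c B \<noteq> c B')"

definition kneser_chi :: "nat \<Rightarrow> nat set set \<Rightarrow> nat" where
  "kneser_chi r G = (LEAST k. \<exists>c. proper_kneser_coloring r G k c)"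

text \<open>Self-delimiting encoding of a list of bit strings: every bit doubled, each string
  terminated by the separator 01.\<close>
definition enc_list :: "bool list list \<Rightarrow> bool list" where
  "enc_list ss = concat (map (\<lambda>s. concat (map (\<lambda>b. [b, b]) s) @ [False, True]) ss)"

fun bin :: "nat \<Rightarrow> bool list" where
  "bin n = (if n = 0 then [] else (n mod 2 = 1) # bin (n div 2))"

fun bits_to_nat :: "bool list \<Rightarrow> nat" where
  "bits_to_nat [] = 0"
| "bits_to_nat (b # bs) = (if b then 1 else 0) + 2 * bits_to_nat bs"

text \<open>Characteristic vector in {0,1}^n of a subset of [n] = {1..n}.\<close>
definition charvec :: "nat \<Rightarrow> nat set \<Rightarrow> bool list" where
  "charvec n B = map (\<lambda>i. Suc i \<in> B) [0..<n]"

text \<open>Straight-line circuits: wires 0..nin-1 are the inputs, gate number j defines wire nin+j,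
  and may only refer to earlier wires; the output is a list of wires, read as a binary number
  (least significant bit first).\<close>
datatype gate = AndG nat nat | OrG nat nat | NotG nat

type_synonym circuit = "nat \<times> gate list \<times> nat list"

fun gate_refs :: "gate \<Rightarrow> nat list" where
  "gate_refs (AndG i j) = [i, j]"
| "gate_refs (OrG i j) = [i, j]"
| "gate_refs (NotG i) = [i]"

fun gate_val :: "bool list \<Rightarrow> gate \<Rightarrow> bool" where
  "gate_val ws (AndG i j) = (ws ! i \<and> ws ! j)"
| "gate_val ws (OrG i j) = (ws ! i \<or> ws ! j)"
| "gate_val ws (NotG i) = (\<not> ws ! i)"

definition circuit_wf :: "circuit \<Rightarrow> bool" where
  "circuit_wf C = (case C of (nin, gs, outs) \<Rightarrow>
     (\<forall>j < length gs. \<forall>i \<in> set (gate_refs (gs ! j)). i < nin + j)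
     \<and> (\<forall>w \<in> set outs. w < nin + length gs))"

definition eval_wires :: "gate list \<Rightarrow> bool list \<Rightarrow> bool list" where
  "eval_wires gs inp = fold (\<lambda>g ws. ws @ [gate_val ws g]) gs inp"

definition circuit_value :: "circuit \<Rightarrow> bool list \<Rightarrow> nat" where
  "circuit_value C v = (case C of (nin, gs, outs) \<Rightarrow>
     bits_to_nat (map (\<lambda>w. eval_wires gs v ! w) outs))"

definition valid_circuit :: "nat \<Rightarrow> nat \<Rightarrow> circuit \<Rightarrow> bool" where
  "valid_circuit n m C \<longleftrightarrow> circuit_wf C \<and> fst C = n \<and>
     (\<forall>v. length v = n \<longrightarrow> circuit_value C v \<in> {1..m})"

fun enc_gate :: "gate \<Rightarrow> bool list" where
  "enc_gate (AndG i j) = enc_list [[False, False], bin i, bin j]"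
| "enc_gate (OrG i j) = enc_list [[False, True], bin i, bin j]"
| "enc_gate (NotG i) = enc_list [[True, False], bin i]"

definition enc_circuit :: "circuit \<Rightarrow> bool list" where
  "enc_circuit C = (case C of (nin, gs, outs) \<Rightarrow>
     enc_list [bin nin, enc_list (map enc_gate gs), enc_list (map bin outs)])"

text \<open>A search problem: a set of (encoded) instances and a solution relation.\<close>
type_synonym problem = "bool list set \<times> (bool list \<Rightarrow> bool list \<Rightarrow> bool)"

datatype move = MoveL | MoveR | Stay

text \<open>Single-tape Turing machine on a one-way infinite tape. Symbols are naturals,
  0 is the blank, 1 encodes the bit 0 and 2 encodes the bit 1. The transition function
  returns None exactly when the machine halts.\<close>
type_synonym tm = "nat \<Rightarrow> nat \<Rightarrow> (nat \<times> nat \<times> move) option"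

text \<open>Configuration: state, tape left of the head (reversed), tape from the head on.\<close>
type_synonym config = "nat \<times> nat list \<times> nat list"

definition tm_finite :: "tm \<Rightarrow> bool" where
  "tm_finite M \<longleftrightarrow> (\<exists>Q S. 2 < S \<and>
     (\<forall>q s. (Q \<le> q \<or> S \<le> s) \<longrightarrow> M q s = None) \<and>
     (\<forall>q s q' w d. M q s = Some (q', w, d) \<longrightarrow> q' < Q \<and> w < S))"

definition head_sym :: "nat list \<Rightarrow> nat" where
  "head_sym r = (case r of [] \<Rightarrow> 0 | a # _ \<Rightarrow> a)"

definition tm_step :: "tm \<Rightarrow> config \<Rightarrow> config" where
  "tm_step M cfg = (case cfg of (q, l, r) \<Rightarrow>
     (case M q (head_sym r) of
        None \<Rightarrow> (q, l, r)
      | Some (q', w, d) \<Rightarrow>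
          (case d of
             MoveL \<Rightarrow> (case l of [] \<Rightarrow> (q', [], w # tl r) | a # l' \<Rightarrow> (q', l', a # w # tl r))
           | MoveR \<Rightarrow> (q', w # l, tl r)
           | Stay \<Rightarrow> (q', l, w # tl r))))"

definition tm_halted :: "tm \<Rightarrow> config \<Rightarrow> bool" where
  "tm_halted M cfg = (case cfg of (q, l, r) \<Rightarrow> M q (head_sym r) = None)"

definition tm_init :: "bool list \<Rightarrow> config" where
  "tm_init x = (0, [], map (\<lambda>b. if b then 2 else 1) x)"

definition tm_output :: "config \<Rightarrow> bool list" where
  "tm_output cfg = (case cfg of (q, l, r) \<Rightarrow>
     map (\<lambda>s. s = 2) (takeWhile (\<lambda>s. s = 1 \<or> s = 2) r))"

definition poly_time_computable :: "(bool list \<Rightarrow> bool list) \<Rightarrow> bool" where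
  "poly_time_computable f \<longleftrightarrow> (\<exists>M c. tm_finite M \<and>
     (\<forall>x. \<exists>t. t \<le> (length x + 2) ^ c \<and>
            tm_halted M ((tm_step M ^^ t) (tm_init x)) \<and>
            tm_output ((tm_step M ^^ t) (tm_init x)) = f x))"

definition poly_reducible :: "problem \<Rightarrow> problem \<Rightarrow> bool" where
  "poly_reducible P Q \<longleftrightarrow> (\<exists>f g. poly_time_computable f \<and> poly_time_computable g \<and>
     (\<forall>x \<in> fst P. f x \<in> fst Q \<and>
        (\<forall>y. snd Q (f x) y \<longrightarrow> snd P x (g (enc_list [x, y])))))"

definition enc_instance :: "('a \<Rightarrow> bool list) \<Rightarrow> 'a \<Rightarrow> circuit \<Rightarrow> bool list" where
  "enc_instance encA \<alpha> C = enc_list [encA \<alpha>, enc_circuit C]"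

definition enc_solution :: "nat \<Rightarrow> nat set list \<Rightarrow> bool list" where
  "enc_solution n Bs = enc_list (map (charvec n) Bs)"

definition kneser_solution :: "nat \<Rightarrow> nat set set \<Rightarrow> (nat set \<Rightarrow> nat) \<Rightarrow> nat set list \<Rightarrow> bool" where
  "kneser_solution r G col Bs \<longleftrightarrow> length Bs = r \<and> (\<forall>i < r. Bs ! i \<in> G) \<and>
     (\<forall>i < r. \<forall>j < r. i \<noteq> j \<longrightarrow> Bs ! i \<inter> Bs ! j = {}) \<and>
     (\<forall>i < r. \<forall>j < r. col (Bs ! i) = col (Bs ! j))"

definition Kneser_problem ::
  "nat \<Rightarrow> 'a set \<Rightarrow> ('a \<Rightarrow> bool list) \<Rightarrow> ('a \<Rightarrow> nat) \<Rightarrow> ('a \<Rightarrow> nat set set) \<Rightarrow> ('a \<Rightarrow> nat) \<Rightarrow> problem" where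
  "Kneser_problem r A encA n F m =
     ({enc_instance encA \<alpha> C | \<alpha> C. \<alpha> \<in> A \<and> valid_circuit (n \<alpha>) (m \<alpha>) C},
      (\<lambda>x y. \<exists>\<alpha> C Bs. \<alpha> \<in> A \<and> valid_circuit (n \<alpha>) (m \<alpha>) C \<and>
         x = enc_instance encA \<alpha> C \<and> y = enc_solution (n \<alpha>) Bs \<and>
         kneser_solution r (F \<alpha>) (\<lambda>B. circuit_value C (charvec (n \<alpha>) B)) Bs))"

end

theory Submission
  imports Defs "HOL-Library.Countable"
begin

section \<open>Generic Turing machine facts\<close>

lemma head_sym_simps[simp]: "head_sym [] = 0" "head_sym (x # r) = x"
  by (simp_all add: head_sym_def)

lemma step_R: "M q (head_sym r) = Some (q', w, MoveR) \<Longrightarrow> tm_step M (q, l, r) = (q', w # l, tl r)"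
  by (simp add: tm_step_def)

lemma step_S: "M q (head_sym r) = Some (q', w, Stay) \<Longrightarrow> tm_step M (q, l, r) = (q', l, w # tl r)"
  by (simp add: tm_step_def)

lemma step_L: "M q (head_sym r) = Some (q', w, MoveL) \<Longrightarrow> tm_step M (q, a # l, r) = (q', l, a # w # tl r)"
  by (simp add: tm_step_def)

lemma halted_fix: "tm_halted M c \<Longrightarrow> tm_step M c = c"
  by (cases c) (auto simp: tm_halted_def tm_step_def)

lemma halted_funpow: "tm_halted M c \<Longrightarrow> (tm_step M ^^ n) c = c"
  by (induction n) (auto simp: halted_fix)

lemma moveR:
  "(\<forall>x\<in>set Z. M q x = Some (q, f x, MoveR)) \<Longrightarrow>
   (tm_step M ^^ length Z) (q, l, Z @ r) = (q, rev (map f Z) @ l, r)"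
proof (induction Z arbitrary: l)
  case Nil
  then show ?case by simp
next
  case (Cons z Z)
  have "tm_step M (q, l, (z # Z) @ r) = (q, f z # l, Z @ r)"
    using Cons.prems by (simp add: tm_step_def)
  then show ?case using Cons by (simp add: funpow_Suc_right del: funpow.simps)
qed

lemma moveL:
  assumes "\<forall>x\<in>set Z. M q x = Some (q, x, MoveL)" "M q s = Some (q, s, MoveL)"
    "M q 3 = Some (q2, 3, MoveR)"
  shows "(tm_step M ^^ (length Z + 2)) (q, rev Z @ 3 # l, s # r) = (q2, 3 # l, Z @ s # r)"
  using assms
proof (induction Z arbitrary: s r rule: rev_induct)
  case Nil
  have 1: "tm_step M (q, 3 # l, s # r) = (q, l, 3 # s # r)"
    using Nil by (simp add: tm_step_def)
  have 2: "tm_step M (q, l, 3 # s # r) = (q2, 3 # l, s # r)"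
    using Nil by (simp add: tm_step_def)
  show ?case by (simp add: numeral_2_eq_2 1 2 del: funpow.simps) (simp add: 1 2)
next
  case (snoc z Z)
  have 1: "tm_step M (q, rev (Z @ [z]) @ 3 # l, s # r) = (q, rev Z @ 3 # l, z # s # r)"
    using snoc.prems by (simp add: tm_step_def)
  have "(tm_step M ^^ (length Z + 2)) (q, rev Z @ 3 # l, z # s # r) = (q2, 3 # l, Z @ z # s # r)"
    using snoc by auto
  then show ?case using 1 by (simp add: funpow_Suc_right del: funpow.simps)
qed


section \<open>The truncating machine\<close>

datatype st = P0 | P1 bool | Rd nat nat | Sk nat nat bool | Ge nat nat bool | Bk nat nat | Cl | Fi | Ha

instance st :: countable by countable_datatype

definition sym :: "bool \<Rightarrow> nat" where "sym b = (if b then 2 else 1)"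
definition outs :: "bool \<Rightarrow> nat" where "outs b = (if b then 6 else 5)"

definition upd :: "nat \<Rightarrow> nat \<Rightarrow> bool \<Rightarrow> nat \<times> nat" where
  "upd k ph b = (if ph = 0 then (k, if b then 2 else 1) else if ph = 1 \<and> b then (Suc k, 0) else (k, 0))"

definition validst :: "nat \<Rightarrow> st \<Rightarrow> bool" where
 "validst R s = (case s of Rd k ph \<Rightarrow> k < R \<and> ph < 3 | Sk k ph b \<Rightarrow> k \<le> R \<and> ph < 3
    | Ge k ph b \<Rightarrow> k \<le> R \<and> ph < 3 | Bk k ph \<Rightarrow> k \<le> R \<and> ph < 3 | _ \<Rightarrow> True)"

fun delta :: "nat \<Rightarrow> st \<Rightarrow> nat \<Rightarrow> (st \<times> nat \<times> move) option" where
  "delta R P0 s = (if s = 1 \<or> s = 2 then Some (P1 (s = 2), 3, MoveR) else None)"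
| "delta R (P1 a) s = (if s = 1 \<or> s = 2 then Some (if \<not> a \<and> s = 2 then Rd 0 0 else P0, 3, MoveR) else None)"
| "delta R (Rd k ph) s = (if s = 1 \<or> s = 2 then
      Some (Sk (fst (upd k ph (s = 2))) (snd (upd k ph (s = 2))) (s = 2), 3, MoveR) else None)"
| "delta R (Sk k ph b) s = (if s = 1 \<or> s = 2 then Some (Ge k ph b, 3, MoveR) else None)"
| "delta R (Ge k ph b) s = (if s = 1 \<or> s = 2 \<or> s = 5 \<or> s = 6 then Some (Ge k ph b, s, MoveR)
      else if s = 0 then Some (Bk k ph, outs b, Stay) else None)"
| "delta R (Bk k ph) s = (if s = 1 \<or> s = 2 \<or> s = 5 \<or> s = 6 then Some (Bk k ph, s, MoveL)
      else if s = 3 then Some (if k = R then Cl else Rd k ph, 3, MoveR) else None)"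
| "delta R Cl s = (if s = 1 \<or> s = 2 then Some (Cl, 3, MoveR) else if s = 5 then Some (Cl, 1, MoveR)
      else if s = 6 then Some (Cl, 2, MoveR) else if s = 0 then Some (Fi, 0, Stay) else None)"
| "delta R Fi s = (if s \<le> 2 then Some (Fi, s, MoveL) else if s = 3 then Some (Ha, 3, MoveR) else None)"
| "delta R Ha s = None"

lemma delta_big: "7 \<le> s \<Longrightarrow> delta R st s = None"
  by (cases st) auto

lemma delta_valid: "0 < R \<Longrightarrow> validst R st \<Longrightarrow> delta R st s = Some (st', w, d) \<Longrightarrow> validst R st' \<and> w < 7"
  by (cases st) (auto simp: validst_def upd_def outs_def split: if_splits)

lemma finite_valid: "finite {s. validst R s}"
proof -
  have "{s. validst R s} \<subseteq> {P0, P1 True, P1 False, Cl, Fi, Ha}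
     \<union> (\<lambda>(k, ph). Rd k ph) ` ({..R} \<times> {..<3})
     \<union> (\<lambda>(k, ph, b). Sk k ph b) ` ({..R} \<times> {..<3} \<times> UNIV)
     \<union> (\<lambda>(k, ph, b). Ge k ph b) ` ({..R} \<times> {..<3} \<times> UNIV)
     \<union> (\<lambda>(k, ph). Bk k ph) ` ({..R} \<times> {..<3})"
  proof
    fix x assume "x \<in> {s. validst R s}"
    then show "x \<in> {P0, P1 True, P1 False, Cl, Fi, Ha}
     \<union> (\<lambda>(k, ph). Rd k ph) ` ({..R} \<times> {..<3})
     \<union> (\<lambda>(k, ph, b). Sk k ph b) ` ({..R} \<times> {..<3} \<times> UNIV)
     \<union> (\<lambda>(k, ph, b). Ge k ph b) ` ({..R} \<times> {..<3} \<times> UNIV)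
     \<union> (\<lambda>(k, ph). Bk k ph) ` ({..R} \<times> {..<3})"
      by (cases x) (auto simp: validst_def image_iff)
  qed
  then show ?thesis by (rule finite_subset) auto
qed

definition sw :: "nat \<Rightarrow> nat" where
  "sw n = (if n = 0 then to_nat P0 else if n = to_nat P0 then 0 else n)"

lemma sw_sw[simp]: "sw (sw n) = n"
  by (simp add: sw_def)

definition enc :: "st \<Rightarrow> nat" where "enc s = sw (to_nat s)"
definition dec :: "nat \<Rightarrow> st" where "dec q = from_nat (sw q)"

lemma dec_enc[simp]: "dec (enc s) = s"
  by (simp add: enc_def dec_def)

lemma enc_P0: "enc P0 = 0"
  by (simp add: enc_def sw_def)

definition QQ :: "nat \<Rightarrow> nat" where "QQ R = Suc (Max (enc ` {s. validst R s}))"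

definition MM :: "nat \<Rightarrow> tm" where
  "MM R q s = (if q < QQ R \<and> validst R (dec q)
     then map_option (\<lambda>(st', w, d). (enc st', w, d)) (delta R (dec q) s) else None)"

lemma enc_lt: "validst R s \<Longrightarrow> enc s < QQ R"
  unfolding QQ_def using finite_valid[of R] by (simp add: le_imp_less_Suc)

lemma MM_st: "validst R s \<Longrightarrow> MM R (enc s) x = map_option (\<lambda>(st', w, d). (enc st', w, d)) (delta R s x)"
  by (simp add: MM_def enc_lt)

lemma MM_finite: assumes R: "0 < R" shows "tm_finite (MM R)"
proof -
  have 1: "\<forall>q s. (QQ R \<le> q \<or> 7 \<le> s) \<longrightarrow> MM R q s = None"
    by (auto simp: MM_def delta_big)
  have 2: "\<forall>q s q' w d. MM R q s = Some (q', w, d) \<longrightarrow> q' < QQ R \<and> w < 7"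
  proof (intro allI impI)
    fix q s q' :: nat and w d assume a: "MM R q s = Some (q', w, d)"
    then obtain st' where "validst R (dec q)" "delta R (dec q) s = Some (st', w, d)" "q' = enc st'"
      by (auto simp: MM_def split: if_splits)
    with delta_valid[OF R] show "q' < QQ R \<and> w < 7" by (blast intro: enc_lt)
  qed
  show ?thesis unfolding tm_finite_def
    by (rule exI[of _ "QQ R"], rule exI[of _ 7]) (use 1 2 in auto)
qed


lemma stR: "validst R s \<Longrightarrow> delta R s (head_sym r) = Some (s', w, MoveR) \<Longrightarrow>
  tm_step (MM R) (enc s, l, r) = (enc s', w # l, tl r)"
  by (rule step_R) (simp add: MM_st)

lemma stS: "validst R s \<Longrightarrow> delta R s (head_sym r) = Some (s', w, Stay) \<Longrightarrow>
  tm_step (MM R) (enc s, l, r) = (enc s', l, w # tl r)"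
  by (rule step_S) (simp add: MM_st)

lemma stRc: "validst R s \<Longrightarrow> delta R s x = Some (s', w, MoveR) \<Longrightarrow>
  tm_step (MM R) (enc s, l, x # r) = (enc s', w # l, r)"
  using stR[of R s "x # r"] by simp

lemma stRn: "validst R s \<Longrightarrow> delta R s 0 = Some (s', w, MoveR) \<Longrightarrow>
  tm_step (MM R) (enc s, l, []) = (enc s', w # l, [])"
  using stR[of R s "[]"] by simp

lemma stSc: "validst R s \<Longrightarrow> delta R s x = Some (s', w, Stay) \<Longrightarrow>
  tm_step (MM R) (enc s, l, x # r) = (enc s', l, w # r)"
  using stS[of R s "x # r"] by simp

lemma stSn: "validst R s \<Longrightarrow> delta R s 0 = Some (s', w, Stay) \<Longrightarrow>
  tm_step (MM R) (enc s, l, []) = (enc s', l, [w])"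
  using stS[of R s "[]"] by simp

lemma stH: "validst R s \<Longrightarrow> delta R s (head_sym r) = None \<Longrightarrow>
  tm_halted (MM R) (enc s, l, r)"
  by (simp add: MM_st tm_halted_def)

lemma tape_syms: "x \<in> set (map sym U @ map outs Os) \<Longrightarrow> x = 1 \<or> x = 2 \<or> x = 5 \<or> x = 6"
  by (auto simp: sym_def outs_def)

lemma sym_eq2[simp]: "(sym a = 2) = a" "(sym a = 1) = (\<not> a)" "sym a \<noteq> 0" "sym a \<noteq> 3"
  "sym a \<noteq> 5" "sym a \<noteq> 6" "sym a \<le> 2"
  by (auto simp: sym_def)

lemma sym_TF[simp]: "sym True = 2" "sym False = 1"
  by (auto simp: sym_def)

lemma outs_simps[simp]: "outs a \<noteq> 0" "outs a \<noteq> 1" "outs a \<noteq> 2" "outs a \<noteq> 3"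
  "(outs a = 6) = a" "(outs a = 5) = (\<not> a)" "\<not> outs a \<le> 2"
  by (auto simp: outs_def)

lemma macro:
  assumes R: "k < R" "ph < 3"
  shows "(tm_step (MM R) ^^ (2 * length (map sym U @ map outs Os) + 5))
      (enc (Rd k ph), l, map sym (a # b # U) @ map outs Os)
    = (enc (if fst (upd k ph a) = R then Cl else Rd (fst (upd k ph a)) (snd (upd k ph a))),
       3 # 3 # l, map sym U @ map outs (Os @ [a]))"
proof -
  define Z where "Z = map sym U @ map outs Os"
  define k' where "k' = fst (upd k ph a)"
  define ph' where "ph' = snd (upd k ph a)"
  define nx where "nx = (if k' = R then Cl else Rd k' ph')"
  have kp: "k' \<le> R" "ph' < 3" using R by (auto simp: k'_def ph'_def upd_def)
  have v: "validst R (Rd k ph)" "validst R (Sk k' ph' a)" "validst R (Ge k' ph' a)" "validst R (Bk k' ph')"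
    using R kp by (auto simp: validst_def)
  have c1: "tm_step (MM R) (enc (Rd k ph), l, sym a # sym b # Z) = (enc (Sk k' ph' a), 3 # l, sym b # Z)"
    using v by (intro stRc) (auto simp: k'_def ph'_def sym_def)
  have c2: "tm_step (MM R) (enc (Sk k' ph' a), 3 # l, sym b # Z) = (enc (Ge k' ph' a), 3 # 3 # l, Z)"
    using v by (intro stRc) auto
  have c3: "(tm_step (MM R) ^^ length Z) (enc (Ge k' ph' a), 3 # 3 # l, Z @ [])
      = (enc (Ge k' ph' a), rev (map (\<lambda>x. x) Z) @ 3 # 3 # l, [])"
    by (rule moveR) (use v tape_syms in \<open>fastforce simp: MM_st Z_def\<close>)
  have c4: "tm_step (MM R) (enc (Ge k' ph' a), rev Z @ 3 # 3 # l, [])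
      = (enc (Bk k' ph'), rev Z @ 3 # 3 # l, [outs a])"
    using v by (intro stSn) auto
  have c5: "(tm_step (MM R) ^^ (length Z + 2)) (enc (Bk k' ph'), rev Z @ 3 # (3 # l), outs a # [])
      = (enc nx, 3 # 3 # l, Z @ outs a # [])"
    by (rule moveL) (use v tape_syms in \<open>fastforce simp: MM_st Z_def nx_def\<close>)+
  let ?f = "tm_step (MM R)"
  let ?c0 = "(enc (Rd k ph), l, sym a # sym b # Z)"
  have s2: "(?f ^^ 2) ?c0 = (enc (Ge k' ph' a), 3 # 3 # l, Z)"
    by (simp add: numeral_2_eq_2 c1 c2)
  have s3: "(?f ^^ (length Z + 2)) ?c0 = (enc (Ge k' ph' a), rev Z @ 3 # 3 # l, [])"
    using c3 by (simp only: funpow_add o_apply s2) simp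
  have s4: "(?f ^^ (Suc (length Z + 2))) ?c0 = (enc (Bk k' ph'), rev Z @ 3 # 3 # l, [outs a])"
    by (simp only: funpow.simps(2) o_apply s3 c4)
  have s5: "(?f ^^ ((length Z + 2) + Suc (length Z + 2))) ?c0 = (enc nx, 3 # 3 # l, Z @ [outs a])"
    unfolding funpow_add[of "length Z + 2" "Suc (length Z + 2)"] o_apply s4 by (rule c5)
  have e: "2 * length Z + 5 = (length Z + 2) + Suc (length Z + 2)" by simp
  have "(?f ^^ (2 * length Z + 5)) ?c0 = (enc nx, 3 # 3 # l, Z @ [outs a])"
    unfolding e by (rule s5)
  then show ?thesis by (simp add: Z_def nx_def k'_def ph'_def)
qed


lemma clean:
  "(tm_step (MM R) ^^ ((length U + length Os) + Suc (length Os + 2)))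
      (enc Cl, 3 # l, map sym U @ map outs Os)
    = (enc Ha, 3 # (replicate (length U) 3 @ l), map sym Os @ [0])"
proof -
  let ?f = "tm_step (MM R)"
  let ?g = "\<lambda>x::nat. if x = 5 then 1 else if x = 6 then 2 else (3::nat)"
  have vC: "validst R Cl" "validst R Fi" by (auto simp: validst_def)
  have m: "map ?g (map sym U @ map outs Os) = replicate (length U) 3 @ map sym Os"
  proof -
    have "map ?g (map sym U) = replicate (length U) 3"
      by (induction U) (auto simp: sym_def)
    moreover have "map ?g (map outs Os) = map sym Os"
      by (induction Os) (auto simp: sym_def outs_def)
    ultimately show ?thesis by simp
  qed
  have c1: "(?f ^^ length (map sym U @ map outs Os)) (enc Cl, 3 # l, (map sym U @ map outs Os) @ [])
     = (enc Cl, rev (map ?g (map sym U @ map outs Os)) @ 3 # l, [])"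
    by (rule moveR) (use vC tape_syms in \<open>fastforce simp: MM_st sym_def outs_def\<close>)
  have c1': "(?f ^^ (length U + length Os)) (enc Cl, 3 # l, map sym U @ map outs Os)
     = (enc Cl, rev (map sym Os) @ 3 # (replicate (length U) 3 @ l), [])"
    using c1 unfolding m by (simp add: replicate_app_Cons_same)
  have c2: "?f (enc Cl, rev (map sym Os) @ 3 # (replicate (length U) 3 @ l), [])
     = (enc Fi, rev (map sym Os) @ 3 # (replicate (length U) 3 @ l), [0])"
    using vC by (intro stSn) auto
  have c3: "(?f ^^ (length (map sym Os) + 2)) (enc Fi, rev (map sym Os) @ 3 # (replicate (length U) 3 @ l), 0 # [])
     = (enc Ha, 3 # (replicate (length U) 3 @ l), map sym Os @ 0 # [])"
    by (rule moveL) (use vC in \<open>auto simp: MM_st sym_def\<close>)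
  have c4: "(?f ^^ (Suc (length Os + 2))) (enc Cl, rev (map sym Os) @ 3 # (replicate (length U) 3 @ l), [])
     = (enc Ha, 3 # (replicate (length U) 3 @ l), map sym Os @ [0])"
    unfolding funpow_Suc_right o_apply c2 using c3 by simp
  show ?thesis
    unfolding add.commute[of "length U + length Os" "Suc (length Os + 2)"]
      funpow_add[of "Suc (length Os + 2)" "length U + length Os"] o_apply c1' by (rule c4)
qed

lemma output_ok: "tm_output (q, l, map sym Os @ [0]) = Os"
proof -
  have "takeWhile (\<lambda>s. s = 1 \<or> s = 2) (map sym Os @ [0]) = map sym Os"
    by (induction Os) (auto simp: sym_def)
  then show ?thesis by (simp add: tm_output_def sym_def comp_def)
qed

lemma halted_Ha: "tm_halted (MM R) (enc Ha, l, r)"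
  by (rule stH) (auto simp: validst_def)


lemma bound_arith: "(t1::nat) \<le> u * (2 * (u + (w + 1)) + 5) + 2 * (u + (w + 1)) + 3 \<Longrightarrow>
   t1 + (2 * (u + w) + 5) \<le> (u + 2) * (2 * (u + 2 + w) + 5) + 2 * (u + 2 + w) + 3"
  by (simp add: algebra_simps)

fun good :: "nat \<Rightarrow> nat \<Rightarrow> nat \<Rightarrow> bool list \<Rightarrow> bool" where
  "good R k ph (a # b # U) = (fst (upd k ph a) = R \<or> good R (fst (upd k ph a)) (snd (upd k ph a)) U)"
| "good R k ph _ = False"

fun lp :: "nat \<Rightarrow> nat \<Rightarrow> nat \<Rightarrow> bool list \<Rightarrow> bool list" where
  "lp R k ph (a # b # U) = a # (if fst (upd k ph a) = R then [] else lp R (fst (upd k ph a)) (snd (upd k ph a)) U)"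
| "lp R k ph _ = []"

lemma head_outs: "delta R (Rd k ph) (head_sym (map outs Os)) = None"
  "delta R (Sk k ph b) (head_sym (map outs Os)) = None"
  by (cases Os, simp_all add: outs_def)+

lemma loop:
  "k < R \<Longrightarrow> ph < 3 \<Longrightarrow> \<exists>t \<le> length U * (2 * (length U + length Os) + 5) + 2 * (length U + length Os) + 3.
    tm_halted (MM R) ((tm_step (MM R) ^^ t) (enc (Rd k ph), 3 # l, map sym U @ map outs Os)) \<and>
    (good R k ph U \<longrightarrow>
      tm_output ((tm_step (MM R) ^^ t) (enc (Rd k ph), 3 # l, map sym U @ map outs Os)) = Os @ lp R k ph U)"
proof (induction R k ph U arbitrary: Os l rule: lp.induct)
  case (1 R k ph a b U)
  let ?f = "tm_step (MM R)"
  let ?c0 = "(enc (Rd k ph), 3 # l, map sym (a # b # U) @ map outs Os)"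
  define k' where "k' = fst (upd k ph a)"
  define ph' where "ph' = snd (upd k ph a)"
  define T0 where "T0 = 2 * length (map sym U @ map outs Os) + 5"
  have kp: "k' \<le> R" "ph' < 3" using 1 by (auto simp: k'_def ph'_def upd_def)
  have mac: "(?f ^^ T0) ?c0 = (enc (if k' = R then Cl else Rd k' ph'), 3 # 3 # 3 # l,
       map sym U @ map outs (Os @ [a]))"
    unfolding T0_def k'_def ph'_def by (rule macro) (use 1 in auto)
  show ?case
  proof (cases "k' = R")
    case True
    define t1 where "t1 = (length U + length (Os @ [a])) + Suc (length (Os @ [a]) + 2)"
    have cl: "(?f ^^ t1) (enc Cl, 3 # 3 # 3 # l, map sym U @ map outs (Os @ [a]))
       = (enc Ha, 3 # (replicate (length U) 3 @ 3 # 3 # l), map sym (Os @ [a]) @ [0])"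
      unfolding t1_def by (rule clean)
    have tt: "(?f ^^ (t1 + T0)) ?c0 = (enc Ha, 3 # (replicate (length U) 3 @ 3 # 3 # l), map sym (Os @ [a]) @ [0])"
      unfolding funpow_add o_apply mac using True cl by simp
    have bd: "t1 + T0 \<le> length (a # b # U) * (2 * (length (a # b # U) + length Os) + 5)
       + 2 * (length (a # b # U) + length Os) + 3"
      unfolding t1_def T0_def by simp
    have h: "tm_halted (MM R) ((?f ^^ (t1 + T0)) ?c0)" unfolding tt by (rule halted_Ha)
    have o: "tm_output ((?f ^^ (t1 + T0)) ?c0) = Os @ lp R k ph (a # b # U)"
      unfolding tt output_ok using True by (simp add: k'_def)
    show ?thesis
      by (rule exI[of _ "t1 + T0"]) (use h o bd in simp)
  next
    case False
    have kl: "k' < R" using kp False by simp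
    obtain t1 where t1: "t1 \<le> length U * (2 * (length U + length (Os @ [a])) + 5) + 2 * (length U + length (Os @ [a])) + 3"
      "tm_halted (MM R) ((?f ^^ t1) (enc (Rd k' ph'), 3 # 3 # 3 # l, map sym U @ map outs (Os @ [a])))"
      "good R k' ph' U \<longrightarrow>
        tm_output ((?f ^^ t1) (enc (Rd k' ph'), 3 # 3 # 3 # l, map sym U @ map outs (Os @ [a]))) = (Os @ [a]) @ lp R k' ph' U"
      using "1.IH"[of "Os @ [a]" "3 # 3 # l", folded k'_def ph'_def] False kl kp by (auto simp: k'_def)
    have tt: "(?f ^^ (t1 + T0)) ?c0 = (?f ^^ t1) (enc (Rd k' ph'), 3 # 3 # 3 # l, map sym U @ map outs (Os @ [a]))"
      unfolding funpow_add o_apply mac using False by simp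
    have bd: "t1 + T0 \<le> length (a # b # U) * (2 * (length (a # b # U) + length Os) + 5)
       + 2 * (length (a # b # U) + length Os) + 3"
      using bound_arith[of t1 "length U" "length Os"] t1(1) unfolding T0_def by simp
    show ?thesis
      by (rule exI[of _ "t1 + T0"], intro conjI bd)
        (use tt t1 False in \<open>simp_all add: k'_def ph'_def\<close>)
  qed
next
  case ("2_1" R k ph)
  have "tm_halted (MM R) (enc (Rd k ph), 3 # l, map sym [] @ map outs Os)"
    by (intro stH) (use "2_1" head_outs in \<open>simp_all add: validst_def del: delta.simps\<close>)
  then show ?case by (intro exI[of _ 0]) auto
next
  case ("2_2" R k ph a)
  have v: "validst R (Rd k ph)" "validst R (Sk (fst (upd k ph a)) (snd (upd k ph a)) a)"
    using "2_2" by (auto simp: validst_def upd_def)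
  have s1: "tm_step (MM R) (enc (Rd k ph), 3 # l, sym a # map outs Os)
     = (enc (Sk (fst (upd k ph a)) (snd (upd k ph a)) a), 3 # 3 # l, map outs Os)"
    using v by (intro stRc) (auto simp: sym_def)
  have "tm_halted (MM R) (enc (Sk (fst (upd k ph a)) (snd (upd k ph a)) a), 3 # 3 # l, map outs Os)"
    by (intro stH) (use v head_outs in \<open>simp_all del: delta.simps\<close>)
  then show ?case using s1 by (intro exI[of _ 1]) auto
qed


fun ph1 :: "bool list \<Rightarrow> bool list option" where
  "ph1 (a # b # w) = (if \<not> a \<and> b then Some w else ph1 w)"
| "ph1 _ = None"

lemma phase1:
  assumes R: "0 < R"
  shows "ph1 w = Some rest \<Longrightarrow> \<exists>l'. length rest < length w \<and>
    (tm_step (MM R) ^^ (length w - length rest)) (enc P0, l, map sym w) = (enc (Rd 0 0), 3 # l', map sym rest)"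
proof (induction w arbitrary: l rule: ph1.induct)
  case (1 a b w)
  let ?f = "tm_step (MM R)"
  have v: "validst R P0" "validst R (P1 a)" by (auto simp: validst_def)
  have s1: "?f (enc P0, l, sym a # sym b # map sym w) = (enc (P1 a), 3 # l, sym b # map sym w)"
    using v by (intro stRc) (auto simp: sym_def)
  have s2: "?f (enc (P1 a), 3 # l, sym b # map sym w)
      = (enc (if \<not> a \<and> b then Rd 0 0 else P0), 3 # 3 # l, map sym w)"
    using v by (intro stRc) (auto simp: sym_def)
  have s12: "(?f ^^ 2) (enc P0, l, map sym (a # b # w)) = (enc (if \<not> a \<and> b then Rd 0 0 else P0), 3 # 3 # l, map sym w)"
    by (simp add: numeral_2_eq_2 s1 s2)
  show ?case
  proof (cases "\<not> a \<and> b")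
    case True
    then have "rest = w" using 1 by simp
    then show ?thesis using s12 True by auto
  next
    case False
    then have "ph1 w = Some rest" using 1(2) by auto
    then obtain l' where l': "length rest < length w"
      "(?f ^^ (length w - length rest)) (enc P0, 3 # 3 # l, map sym w) = (enc (Rd 0 0), 3 # l', map sym rest)"
      using 1(1)[OF False] by blast
    have e: "length (a # b # w) - length rest = (length w - length rest) + 2" using l'(1) by simp
    show ?thesis
      unfolding e funpow_add o_apply using s12 False l' by auto
  qed
qed auto

lemma phase1_none:
  "ph1 w = None \<Longrightarrow> \<exists>t \<le> length w. tm_halted (MM R) ((tm_step (MM R) ^^ t) (enc P0, l, map sym w))"
proof (induction w arbitrary: l rule: ph1.induct)
  case (1 a b w)
  let ?f = "tm_step (MM R)"
  have v: "validst R P0" "validst R (P1 a)" by (auto simp: validst_def)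
  have s1: "?f (enc P0, l, sym a # sym b # map sym w) = (enc (P1 a), 3 # l, sym b # map sym w)"
    using v by (intro stRc) (auto simp: sym_def)
  have F: "\<not> (\<not> a \<and> b)" and N: "ph1 w = None" using 1 by (auto split: if_splits)
  have s2: "?f (enc (P1 a), 3 # l, sym b # map sym w) = (enc P0, 3 # 3 # l, map sym w)"
    using v F by (intro stRc) (auto simp: sym_def)
  have s12: "(?f ^^ 2) (enc P0, l, map sym (a # b # w)) = (enc P0, 3 # 3 # l, map sym w)"
    by (simp add: numeral_2_eq_2 s1 s2)
  obtain t where t: "t \<le> length w" "tm_halted (MM R) ((?f ^^ t) (enc P0, 3 # 3 # l, map sym w))"
    using 1(1)[OF F N] by blast
  have "(?f ^^ (t + 2)) (enc P0, l, map sym (a # b # w)) = (?f ^^ t) (enc P0, 3 # 3 # l, map sym w)"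
    by (simp only: funpow_add o_apply s12)
  then show ?case
    by (intro exI[of _ "t + 2"]) (use t in auto)
next
  case ("2_1" l)
  have "tm_halted (MM R) (enc P0, l, [])" by (rule stH) (auto simp: validst_def)
  then show ?case by (intro exI[of _ 0]) auto
next
  case ("2_2" a l)
  have v: "validst R P0" "validst R (P1 a)" by (auto simp: validst_def)
  have s1: "tm_step (MM R) (enc P0, l, [sym a]) = (enc (P1 a), 3 # l, [])"
    using v by (intro stRc) (auto simp: sym_def)
  have "tm_halted (MM R) (enc (P1 a), 3 # l, [])" by (rule stH) (auto simp: validst_def)
  then show ?case using s1 by (intro exI[of _ 1]) auto
qed


lemma arith3: "(N::nat) * (2 * N + 5) + 3 * N + 3 \<le> (N + 2) ^ 3"
  by (simp add: power3_eq_cube algebra_simps)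

lemma init_sym: "tm_init w = (enc P0, [], map sym w)"
  by (simp add: tm_init_def enc_P0 sym_def)

lemma run_all:
  assumes R: "0 < R"
  shows "\<exists>t \<le> (length w + 2) ^ 3. tm_halted (MM R) ((tm_step (MM R) ^^ t) (tm_init w)) \<and>
    (\<forall>rest. ph1 w = Some rest \<longrightarrow> good R 0 0 rest \<longrightarrow>
       tm_output ((tm_step (MM R) ^^ t) (tm_init w)) = lp R 0 0 rest)"
proof (cases "ph1 w")
  case None
  obtain t where t: "t \<le> length w" "tm_halted (MM R) ((tm_step (MM R) ^^ t) (enc P0, [], map sym w))"
    using phase1_none[OF None] by blast
  have "length w \<le> (length w + 2) ^ 3" using arith3[of "length w"] by linarith
  then show ?thesis using t None unfolding init_sym by (intro exI[of _ t]) auto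
next
  case (Some rest)
  let ?f = "tm_step (MM R)"
  obtain l' where l': "length rest < length w"
    "(?f ^^ (length w - length rest)) (enc P0, [], map sym w) = (enc (Rd 0 0), 3 # l', map sym rest)"
    using phase1[OF R Some] by blast
  obtain t1 where t1: "t1 \<le> length rest * (2 * (length rest + length ([]::bool list)) + 5)
       + 2 * (length rest + length ([]::bool list)) + 3"
    "tm_halted (MM R) ((?f ^^ t1) (enc (Rd 0 0), 3 # l', map sym rest @ map outs []))"
    "good R 0 0 rest \<longrightarrow> tm_output ((?f ^^ t1) (enc (Rd 0 0), 3 # l', map sym rest @ map outs [])) = [] @ lp R 0 0 rest"
    using loop[OF R, of 0 rest "[]" l'] by auto
  have e: "(?f ^^ (t1 + (length w - length rest))) (tm_init w) = (?f ^^ t1) (enc (Rd 0 0), 3 # l', map sym rest)"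
    unfolding init_sym by (simp only: funpow_add o_apply l'(2))
  have m: "length rest * (2 * length rest + 5) \<le> length w * (2 * length w + 5)"
    using l'(1) by (intro mult_le_mono) auto
  have "t1 + (length w - length rest) \<le> (length w + 2) ^ 3"
    using t1(1) m arith3[of "length w"] l'(1) by simp
  then show ?thesis using t1 Some e by (intro exI[of _ "t1 + (length w - length rest)"]) auto
qed

definition gfun :: "nat \<Rightarrow> bool list \<Rightarrow> bool list" where
  "gfun R x = tm_output ((tm_step (MM R) ^^ (LEAST t. tm_halted (MM R) ((tm_step (MM R) ^^ t) (tm_init x)))) (tm_init x))"

lemma gfun_eq:
  assumes "tm_halted M ((tm_step M ^^ t) c)"
  defines "L \<equiv> LEAST t. tm_halted M ((tm_step M ^^ t) c)"
  shows "L \<le> t" "tm_halted M ((tm_step M ^^ L) c)" "(tm_step M ^^ t) c = (tm_step M ^^ L) c"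
proof -
  show L: "L \<le> t" unfolding L_def using assms(1) by (rule Least_le)
  show H: "tm_halted M ((tm_step M ^^ L) c)" unfolding L_def using assms(1) by (rule LeastI)
  have "t = (t - L) + L" using L by simp
  then have "(tm_step M ^^ t) c = (tm_step M ^^ (t - L)) ((tm_step M ^^ L) c)"
    by (metis funpow_add o_apply)
  then show "(tm_step M ^^ t) c = (tm_step M ^^ L) c" using halted_funpow[OF H] by simp
qed

lemma gfun_poly: "0 < R \<Longrightarrow> poly_time_computable (gfun R)"
  unfolding poly_time_computable_def
proof (rule exI[of _ "MM R"], rule exI[of _ 3], intro conjI allI)
  assume R: "0 < R"
  show "tm_finite (MM R)" by (rule MM_finite[OF R])
  fix x
  obtain t where t: "t \<le> (length x + 2) ^ 3" "tm_halted (MM R) ((tm_step (MM R) ^^ t) (tm_init x))"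
    using run_all[OF R, of x] by blast
  note g = gfun_eq[OF t(2)]
  show "\<exists>t\<le>(length x + 2) ^ 3. tm_halted (MM R) ((tm_step (MM R) ^^ t) (tm_init x)) \<and>
          tm_output ((tm_step (MM R) ^^ t) (tm_init x)) = gfun R x"
    by (rule exI[of _ "LEAST t. tm_halted (MM R) ((tm_step (MM R) ^^ t) (tm_init x))"])
      (use g t in \<open>auto simp: gfun_def\<close>)
qed

lemma gfun_out: "0 < R \<Longrightarrow> ph1 w = Some rest \<Longrightarrow> good R 0 0 rest \<Longrightarrow> gfun R w = lp R 0 0 rest"
proof -
  assume R: "0 < R" and a: "ph1 w = Some rest" "good R 0 0 rest"
  obtain t where t: "tm_halted (MM R) ((tm_step (MM R) ^^ t) (tm_init w))"
    "tm_output ((tm_step (MM R) ^^ t) (tm_init w)) = lp R 0 0 rest"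
    using run_all[OF R, of w] a by blast
  show ?thesis using gfun_eq(3)[OF t(1)] t(2) by (simp add: gfun_def)
qed

definition M0 :: tm where "M0 q s = None"

lemma out_init: "map (\<lambda>s. s = 2) (takeWhile (\<lambda>s. s = 1 \<or> s = 2) (map (\<lambda>b. if b then 2 else (1::nat)) x)) = x"
  by (induction x) auto

lemma id_poly: "poly_time_computable (\<lambda>x. x)"
  unfolding poly_time_computable_def
proof (rule exI[of _ M0], rule exI[of _ 1], intro conjI allI)
  show "tm_finite M0" unfolding tm_finite_def by (intro exI[of _ 0] exI[of _ 3]) (auto simp: M0_def)
  fix x :: "bool list"
  have "tm_output (tm_init x) = x" using out_init[of x] by (simp add: tm_output_def tm_init_def)
  then show "\<exists>t\<le>(length x + 2) ^ 1. tm_halted M0 ((tm_step M0 ^^ t) (tm_init x)) \<and>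
          tm_output ((tm_step M0 ^^ t) (tm_init x)) = x"
    by (intro exI[of _ 0]) (auto simp: tm_halted_def tm_init_def M0_def)
qed


definition DD :: "bool list \<Rightarrow> bool list" where "DD s = concat (map (\<lambda>b. [b, b]) s)"

lemma DD_simps[simp]: "DD [] = []" "DD (b # s) = b # b # DD s" "DD (s @ t) = DD s @ DD t"
  by (simp_all add: DD_def)

lemma enc_list_simps[simp]: "enc_list [] = []" "enc_list (c # cs) = DD c @ [False, True] @ enc_list cs"
  by (simp_all add: enc_list_def DD_def)

lemma ph1_DD: "ph1 (DD x @ r) = ph1 r"
  by (induction x) auto

lemma ph1_enc2: "ph1 (enc_list [x, y]) = Some (DD y @ [False, True])"
  by (simp add: ph1_DD)

lemma lp_DD: "k < R \<Longrightarrow> lp R k 0 (DD (DD c) @ r) = DD c @ lp R k 0 r \<and> good R k 0 (DD (DD c) @ r) = good R k 0 r"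
  by (induction c) (auto simp: upd_def)

lemma lp_enc: "k < R \<Longrightarrow> R - k \<le> length cs \<Longrightarrow>
  lp R k 0 (DD (enc_list cs) @ t) = enc_list (take (R - k) cs) \<and> good R k 0 (DD (enc_list cs) @ t)"
proof (induction cs arbitrary: k)
  case Nil
  then show ?case by simp
next
  case (Cons c cs)
  have e: "DD (enc_list (c # cs)) @ t = DD (DD c) @ (False # False # True # True # (DD (enc_list cs) @ t))"
    by simp
  have tk: "take (R - k) (c # cs) = c # take (R - Suc k) cs"
  proof -
    have "R - k = Suc (R - Suc k)" using Cons.prems by simp
    then show ?thesis by simp
  qed
  show ?case
  proof (cases "Suc k = R")
    case True
    then show ?thesis unfolding e tk using lp_DD[OF Cons.prems(1)] by (simp add: upd_def)
  next
    case False
    have "Suc k < R" "R - Suc k \<le> length cs" using Cons.prems False by auto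
    note IH = Cons.IH[OF this]
    show ?thesis unfolding e tk using lp_DD[OF Cons.prems(1)] IH False Cons.prems(1) by (simp add: upd_def)
  qed
qed

theorem lemma5p8:
  fixes r1 r2 :: nat and A :: "'a set" and encA :: "'a \<Rightarrow> bool list"
    and n :: "'a \<Rightarrow> nat" and F :: "'a \<Rightarrow> nat set set" and m :: "'a \<Rightarrow> nat"
  assumes "2 \<le> r1" and "r1 \<le> r2"
    and "inj_on encA A"
    and "\<forall>\<alpha>\<in>A. \<forall>B\<in>F \<alpha>. B \<noteq> {} \<and> B \<subseteq> {1..n \<alpha>}"
    and "\<forall>\<alpha>\<in>A. m \<alpha> < kneser_chi r2 (F \<alpha>)"
  shows "poly_reducible (Kneser_problem r1 A encA n F m) (Kneser_problem r2 A encA n F m)"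
proof -
  have R: "0 < r1" using assms(1) by simp
  have main: "snd (Kneser_problem r1 A encA n F m) x (gfun r1 (enc_list [x, y]))"
    if Q: "snd (Kneser_problem r2 A encA n F m) x y" for x y
  proof -
    obtain \<alpha> C Bs where h: "\<alpha> \<in> A" "valid_circuit (n \<alpha>) (m \<alpha>) C" "x = enc_instance encA \<alpha> C"
      "y = enc_solution (n \<alpha>) Bs"
      "kneser_solution r2 (F \<alpha>) (\<lambda>B. circuit_value C (charvec (n \<alpha>) B)) Bs"
      using Q unfolding Kneser_problem_def snd_conv by blast
    have len: "length Bs = r2" using h(5) by (simp add: kneser_solution_def)
    have y: "y = enc_list (map (charvec (n \<alpha>)) Bs)" using h(4) by (simp add: enc_solution_def)
    have le: "r1 - 0 \<le> length (map (charvec (n \<alpha>)) Bs)" using len assms(2) by simp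
    note L = lp_enc[OF R le, of "[False, True]"]
    have g: "gfun r1 (enc_list [x, y]) = enc_list (take r1 (map (charvec (n \<alpha>)) Bs))"
      using gfun_out[OF R ph1_enc2[of x y]] L unfolding y by simp
    have g': "gfun r1 (enc_list [x, y]) = enc_solution (n \<alpha>) (take r1 Bs)"
      unfolding g enc_solution_def by (simp add: take_map)
    have ks: "kneser_solution r1 (F \<alpha>) (\<lambda>B. circuit_value C (charvec (n \<alpha>) B)) (take r1 Bs)"
      using h(5) len assms(2) by (auto simp: kneser_solution_def)
    show ?thesis unfolding Kneser_problem_def snd_conv
      using h(1,2,3) g' ks by blast
  qed
  have inst: "fst (Kneser_problem r1 A encA n F m) = fst (Kneser_problem r2 A encA n F m)"
    by (simp add: Kneser_problem_def)
  show ?thesis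
    unfolding poly_reducible_def
    by (rule exI[of _ "\<lambda>x. x"], rule exI[of _ "gfun r1"]) (use id_poly gfun_poly[OF R] main inst in auto)
qed

end
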